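(* Consider a degree-corrected stochastic block model with $K$ communities, membership matrix $\Theta\in\mathbb M_{n,K}$ (every community nonempty), symmetric $B\in[0,1]^{K\times K}$ with $\mathrm{rank}(B)=K'<K$, and node propensities $\vartheta\in\mathbb R^n_{+}$ with $\max_{i\in G_k}\vartheta_i=1$ for each $k$. Let $P=\mathrm{diag}(\vartheta)\Theta B\Theta^\intercal\mathrm{diag}(\vartheta)=U\Sigma U^\intercal$ be its eigenvalue decomposition with $U\in\mathbb R^{n\times K'}$. Let $\phi_k\in\mathbb R^n$ agree with $\vartheta$ on $G_k$ and be zero elsewhere, $\Omega=\mathrm{diag}(\|\phi_1\|_2,\dots,\|\phi_K\|_2)$, $\bar B=\Omega B\Omega$, and $\bar B=HDH^\intercal$ its eigenvalue decomposition with $H\in\mathbb R^{K\times K'}$. Suppose there exist deterministic positive sequences $\{\eta'_n\},\{\underline\iota_n\},\{\overline\iota_n\},\{\beta_n\}$ such that $\min_{1\le k<l\le K}\bar B_{kk}\bar B_{ll}-\bar B_{kl}^2\ge\eta'_n>0$, $0<\underline\iota_n<\Sigma_{ii}<\overline\iota_n$ for all $1\le i\le K'$, and $0<\min_k\bar B_{kk}\le\max_k\bar B_{kk}\le\beta_n$. Then $$\max_{k\ne l}\cos(H_{k\ast},H_{l\ast})\le\xi'_n\quad\text{with}\quad\xi'_n=\sqrt{1-\frac{\eta'_n}{\overline\iota_n\beta_n^2/\underline\iota_n}}.$$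
   Context: $\mathbb M_{n,K}$: $n\times K$ 0/1 matrices with exactly one $1$ per row; $G_k$ is the set of nodes whose row has its $1$ in column $k$. $M_{k\ast}$ denotes the $k$-th row. $\cos(a,b)=a^\intercal b/(\|a\|_2\|b\|_2)$. *)

theory Defs
  imports "HOL-Analysis.Analysis"
begin

definition membership_matrix :: "real^'K^'n \<Rightarrow> bool" where
  "membership_matrix Th \<longleftrightarrow> (\<forall>i k. Th$i$k = 0 \<or> Th$i$k = 1) \<and> (\<forall>i. \<exists>!k. Th$i$k = 1)"

definition community :: "real^'K^'n \<Rightarrow> 'K \<Rightarrow> 'n set" where
  "community Th k = {i. Th$i$k = 1}"

definition diag_mat :: "real^'n \<Rightarrow> real^'n^'n" where
  "diag_mat v = (\<chi> i j. if i = j then v$i else 0)"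

definition is_diag :: "real^'n^'n \<Rightarrow> bool" where
  "is_diag M \<longleftrightarrow> (\<forall>i j. i \<noteq> j \<longrightarrow> M$i$j = 0)"

definition cosine :: "real^'a \<Rightarrow> real^'a \<Rightarrow> real" where
  "cosine a b = (a \<bullet> b) / (norm a * norm b)"

definition phi_vec :: "real^'K^'n \<Rightarrow> real^'n \<Rightarrow> 'K \<Rightarrow> real^'n" where
  "phi_vec Th th k = (\<chi> i. if i \<in> community Th k then th$i else 0)"

definition Omega_mat :: "real^'K^'n \<Rightarrow> real^'n \<Rightarrow> real^'K^'K" where
  "Omega_mat Th th = diag_mat (\<chi> k. norm (phi_vec Th th k))"

definition Bbar :: "real^'K^'n \<Rightarrow> real^'n \<Rightarrow> real^'K^'K \<Rightarrow> real^'K^'K" where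
  "Bbar Th th B = Omega_mat Th th ** B ** Omega_mat Th th"

end

theory Submission
  imports Defs
begin

lemma key_bound:
  fixes x y :: "real^'r" and d :: "'r \<Rightarrow> real"
  assumes d: "\<forall>i. lo < d i \<and> d i < hi" and lo: "lo > 0"
    and Dxx: "Dxx = (\<Sum>i\<in>UNIV. d i * x$i * x$i)"
    and Dyy: "Dyy = (\<Sum>i\<in>UNIV. d i * y$i * y$i)"
    and Dxy: "Dxy = (\<Sum>i\<in>UNIV. d i * x$i * y$i)"
    and eta: "eta \<le> Dxx*Dyy - Dxy^2" "eta > 0"
    and b: "0 < Dxx" "Dxx \<le> beta" "0 < Dyy" "Dyy \<le> beta"
  shows "cosine x y \<le> sqrt (1 - eta/(hi*beta^2/lo))"
proof -
  define nx where "nx = x \<bullet> x"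
  define ny where "ny = y \<bullet> y"
  define xy where "xy = x \<bullet> y"
  have nx: "nx = (\<Sum>i\<in>UNIV. x$i * x$i)" unfolding nx_def inner_vec_def by simp
  have ny: "ny = (\<Sum>i\<in>UNIV. y$i * y$i)" unfolding ny_def inner_vec_def by simp
  have xy: "xy = (\<Sum>i\<in>UNIV. x$i * y$i)" unfolding xy_def inner_vec_def by simp
  have hi: "hi > 0" using d lo by force
  have "Dxx \<le> (\<Sum>i\<in>UNIV. hi * (x$i * x$i))" unfolding Dxx
    by (rule sum_mono) (metis d less_imp_le mult.assoc mult_right_mono zero_le_square)
  hence "Dxx \<le> hi * nx" by (simp add: nx sum_distrib_left)
  moreover have "nx \<ge> 0" by (simp add: nx_def)
  ultimately have nxp: "nx > 0" using b(1) by (cases "nx = 0") auto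
  have "(\<Sum>i\<in>UNIV. lo * (y$i * y$i)) \<le> Dyy" unfolding Dyy
    by (rule sum_mono) (metis d less_imp_le mult.assoc mult_right_mono zero_le_square)
  hence nyD: "lo * ny \<le> Dyy" by (simp add: ny sum_distrib_left)
  define t where "t = xy / nx"
  define E where "E = (\<Sum>i\<in>UNIV. d i * (y$i - t * x$i)^2)"
  have E1: "E = Dyy - 2*t*Dxy + t^2 * Dxx"
    unfolding E_def Dyy Dxy Dxx
    by (simp add: power2_eq_square algebra_simps sum.distrib sum_subtractf sum_distrib_left)
  have "E \<le> (\<Sum>i\<in>UNIV. hi * (y$i - t * x$i)^2)" unfolding E_def
    by (rule sum_mono) (metis d less_imp_le mult_right_mono zero_le_power2)
  also have "\<dots> = hi * (ny - 2*t*xy + t^2*nx)"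
    by (simp add: nx ny xy power2_eq_square algebra_simps sum.distrib sum_subtractf sum_distrib_left)
  also have "ny - 2*t*xy + t^2*nx = ny - xy^2/nx"
    using nxp unfolding t_def by (simp add: field_simps power2_eq_square)
  finally have E2: "E \<le> hi * (ny - xy^2/nx)" .
  have "Dxx * E = (Dxx*Dyy - Dxy^2) + (Dxy - t*Dxx)^2"
    unfolding E1 by (simp add: power2_eq_square algebra_simps)
  hence "eta \<le> Dxx * E" using eta by (smt (verit) zero_le_power2)
  also have "\<dots> \<le> Dxx * (hi * (ny - xy^2/nx))" using E2 b by (simp add: mult_left_mono)
  finally have e1: "eta \<le> Dxx * (hi * (ny - xy^2/nx))" .
  have "Dyy \<le> (\<Sum>i\<in>UNIV. hi * (y$i * y$i))" unfolding Dyy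
    by (rule sum_mono) (metis d less_imp_le mult.assoc mult_right_mono zero_le_square)
  hence "Dyy \<le> hi * ny" by (simp add: ny sum_distrib_left)
  moreover have "ny \<ge> 0" by (simp add: ny_def)
  ultimately
  have nyp: "ny > 0" using b(3) lo by (cases "ny = 0") auto
  define s where "s = 1 - xy^2/(nx*ny)"
  have cs: "xy^2 \<le> nx * ny" unfolding xy_def nx_def ny_def
    by (metis Cauchy_Schwarz_ineq power2_eq_square)
  have s0: "s \<ge> 0" unfolding s_def using cs nxp nyp by (simp add: field_simps)
  have "ny - xy^2/nx = ny * s" unfolding s_def using nxp nyp by (simp add: field_simps)
  hence "eta \<le> Dxx * hi * ny * s" using e1 by (metis mult.assoc)
  also have "\<dots> \<le> beta * hi * (beta / lo) * s"
  proof -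
    have "ny \<le> beta/lo" using nyD b lo by (simp add: field_simps)
    moreover have "Dxx * hi \<le> beta * hi" using b hi by simp
    ultimately show ?thesis using s0 hi b nyp
      by (meson mult_mono mult_nonneg_nonneg mult_right_mono less_imp_le order_trans)
  qed
  finally have "eta \<le> (hi*beta^2/lo) * s" by (simp add: power2_eq_square field_simps)
  hence sge: "eta/(hi*beta^2/lo) \<le> s" using hi lo b by (simp add: field_simps)
  have c: "cosine x y = xy / sqrt (nx * ny)"
    unfolding cosine_def xy_def nx_def ny_def by (simp add: norm_eq_sqrt_inner real_sqrt_mult)
  have "cosine x y \<le> \<bar>cosine x y\<bar>" by simp
  also have "\<dots> = sqrt ((cosine x y)^2)" by simp
  also have "(cosine x y)^2 = 1 - s" unfolding c s_def using nxp nyp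
    by (simp add: power_divide)
  finally have "cosine x y \<le> sqrt (1 - s)" .
  moreover have "sqrt (1 - s) \<le> sqrt (1 - eta/(hi*beta^2/lo))"
    using sge by (subst real_sqrt_le_iff) linarith
  ultimately show ?thesis by linarith
qed

lemma diag_right: "is_diag D \<Longrightarrow> (A ** D)$k$j = A$k$j * D$j$j"
proof -
  assume "is_diag D"
  hence "(\<Sum>i\<in>UNIV. A$k$i * D$i$j) = (\<Sum>i\<in>UNIV. if i = j then A$k$j * D$j$j else 0)"
    by (intro sum.cong) (auto simp: is_diag_def)
  thus ?thesis by (simp add: matrix_matrix_mult_def)
qed

lemma diag_left: "is_diag D \<Longrightarrow> (D ** A)$i$j = D$i$i * A$i$j"
proof -
  assume "is_diag D"
  hence "(\<Sum>k\<in>UNIV. D$i$k * A$k$j) = (\<Sum>k\<in>UNIV. if k = i then D$i$i * A$i$j else 0)"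
    by (intro sum.cong) (auto simp: is_diag_def)
  thus ?thesis by (simp add: matrix_matrix_mult_def)
qed

lemma diag_vec: "is_diag D \<Longrightarrow> (D *v w)$j = D$j$j * w$j"
proof -
  assume "is_diag D"
  hence "(\<Sum>k\<in>UNIV. D$j$k * w$k) = (\<Sum>k\<in>UNIV. if k = j then D$j$j * w$j else 0)"
    by (intro sum.cong) (auto simp: is_diag_def)
  thus ?thesis by (simp add: matrix_vector_mult_def)
qed

lemma is_diag_diag_mat: "is_diag (diag_mat v)"
  by (simp add: is_diag_def diag_mat_def)

lemma diag_mat_mult: "diag_mat a ** diag_mat b = diag_mat (\<chi> i. a$i * b$i)"
  by (simp add: vec_eq_iff diag_right is_diag_diag_mat) (simp add: diag_mat_def)

lemma transpose_diag_mat: "transpose (diag_mat a) = diag_mat a"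
  by (simp add: vec_eq_iff transpose_def diag_mat_def)

lemma mat1_diag: "mat 1 = diag_mat (\<chi> i. 1)"
  by (simp add: vec_eq_iff mat_def diag_mat_def)
theorem lemma4:
  fixes Th :: "real^'K^'n"
    and B :: "real^'K^'K"
    and th :: "real^'n"
    and U :: "real^'r^'n" and Sig :: "real^'r^'r"
    and H :: "real^'r^'K" and D :: "real^'r^'r"
    and eta' iota_lo iota_hi beta :: real
  assumes memb: "membership_matrix Th"
    and nonempty: "\<forall>k. community Th k \<noteq> {}"
    and B_sym: "transpose B = B"
    and B_range: "\<forall>k l. 0 \<le> B$k$l \<and> B$k$l \<le> 1"
    and rankB: "rank B = CARD('r)"
    and rank_lt: "CARD('r) < CARD('K)"
    and th_pos: "\<forall>i. th$i > 0"
    and th_max: "\<forall>k. Max ((\<lambda>i. th$i) ` community Th k) = 1"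
    and P_eig: "diag_mat th ** Th ** B ** transpose Th ** diag_mat th = U ** Sig ** transpose U"
    and U_orth: "transpose U ** U = mat 1"
    and Sig_diag: "is_diag Sig"
    and Bbar_eig: "Bbar Th th B = H ** D ** transpose H"
    and H_orth: "transpose H ** H = mat 1"
    and D_diag: "is_diag D"
    and pos: "eta' > 0" "iota_lo > 0" "iota_hi > 0" "beta > 0"
    and eta_bd: "\<forall>k l. k \<noteq> l \<longrightarrow>
        Bbar Th th B$k$k * Bbar Th th B$l$l - (Bbar Th th B$k$l)^2 \<ge> eta'"
    and iota_bd: "\<forall>i. iota_lo < Sig$i$i \<and> Sig$i$i < iota_hi"
    and beta_bd: "\<forall>k. 0 < Bbar Th th B$k$k \<and> Bbar Th th B$k$k \<le> beta"
  shows "\<forall>k l. k \<noteq> l \<longrightarrow>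
           cosine (H$k) (H$l) \<le> sqrt (1 - eta' / (iota_hi * beta^2 / iota_lo))"
proof -
  define P where "P = diag_mat th ** Th ** B ** transpose Th ** diag_mat th"
  define Phi where "Phi = diag_mat th ** Th"
  define nrm where "nrm = (\<chi> k. norm (phi_vec Th th k))"
  define Oinv where "Oinv = diag_mat (\<chi> k. 1 / nrm$k)"
  define Om where "Om = Omega_mat Th th"
  define Bb where "Bb = Bbar Th th B"
  define Q where "Q = Phi ** Oinv"
  have Om_def': "Om = diag_mat nrm" unfolding Om_def Omega_mat_def nrm_def ..
  have Bb_def': "Bb = Om ** B ** Om" unfolding Bb_def Bbar_def Om_def ..
  have Phi_e: "Phi$j$k = th$j * Th$j$k" for j k
    unfolding Phi_def by (simp add: diag_left is_diag_diag_mat) (simp add: diag_mat_def)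
  have Th01: "Th$j$k = 0 \<or> Th$j$k = 1" for j k using memb unfolding membership_matrix_def by blast
  have Thuniq: "Th$j$k = 1 \<Longrightarrow> Th$j$l = 1 \<Longrightarrow> k = l" for j k l
    using memb unfolding membership_matrix_def by blast
  have phi_col: "phi_vec Th th k = column k Phi" for k
    using Th01 by (auto simp: vec_eq_iff phi_vec_def column_def Phi_e community_def)
  have nrm_pos: "nrm$k > 0" for k
  proof -
    obtain i where "i \<in> community Th k" using nonempty by blast
    hence "phi_vec Th th k $ i = th$i" by (simp add: phi_vec_def)
    hence "phi_vec Th th k \<noteq> 0" using th_pos by (metis less_irrefl zero_index)
    thus ?thesis by (simp add: nrm_def)
  qed
  have nrm_nz: "nrm$k \<noteq> 0" for k using nrm_pos[of k] by simp
  have OO1: "Oinv ** Om = mat 1" "Om ** Oinv = mat 1"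
    unfolding Oinv_def Om_def' mat1_diag diag_mat_mult using nrm_pos
    by (auto simp: vec_eq_iff nrm_nz intro!: arg_cong[where f=diag_mat])
  have PhiTPhi: "transpose Phi ** Phi = diag_mat (\<chi> k. (nrm$k)^2)"
  proof -
    have "(transpose Phi ** Phi)$k$l = (if k = l then (nrm$k)^2 else 0)" for k l
    proof -
      have "(transpose Phi ** Phi)$k$l = column k Phi \<bullet> column l Phi"
        by (simp add: matrix_matrix_mult_def transpose_def column_def inner_vec_def)
      moreover have "k \<noteq> l \<Longrightarrow> column k Phi \<bullet> column l Phi = 0"
      proof -
        assume kl: "k \<noteq> l"
        have "Th$j$k * Th$j$l = 0" for j using Th01[of j k] Th01[of j l] Thuniq[of j k l] kl by auto
        have "column k Phi \<bullet> column l Phi = (\<Sum>j\<in>UNIV. (th$j)^2 * (Th$j$k * Th$j$l))"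
          by (simp add: inner_vec_def column_def Phi_e power2_eq_square algebra_simps)
        also have "\<dots> = 0" using \<open>\<And>j. Th$j$k * Th$j$l = 0\<close>
          by (intro sum.neutral) (metis mult_zero_right)
        finally show ?thesis .
      qed
      moreover have "column k Phi \<bullet> column k Phi = (nrm$k)^2"
        by (simp add: nrm_def phi_col power2_norm_eq_inner)
      ultimately show ?thesis by auto
    qed
    thus ?thesis by (simp add: vec_eq_iff diag_mat_def)
  qed
  have QTQ: "transpose Q ** Q = mat 1"
  proof -
    have "transpose Q ** Q = Oinv ** (transpose Phi ** Phi) ** Oinv"
      unfolding Q_def matrix_transpose_mul Oinv_def transpose_diag_mat
      by (simp add: matrix_mul_assoc)
    also have "\<dots> = mat 1"
      unfolding PhiTPhi Oinv_def diag_mat_mult mat1_diag using nrm_pos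
      by (auto simp: vec_eq_iff power2_eq_square nrm_nz intro!: arg_cong[where f=diag_mat])
    finally show ?thesis .
  qed
  have QBQ: "Q ** Bb ** transpose Q = P"
  proof -
    have "Q ** Bb ** transpose Q = Phi ** (Oinv ** Om) ** B ** (Om ** Oinv) ** transpose Phi"
      unfolding Q_def Bb_def' matrix_transpose_mul Oinv_def transpose_diag_mat
      by (simp add: matrix_mul_assoc)
    also have "\<dots> = P"
      unfolding OO1 P_def Phi_def matrix_transpose_mul transpose_diag_mat
      by (simp add: matrix_mul_assoc)
    finally show ?thesis .
  qed
  have BOO: "B = Oinv ** Bb ** Oinv"
  proof -
    have "Oinv ** Bb ** Oinv = (Oinv ** Om) ** B ** (Om ** Oinv)"
      unfolding Bb_def' by (simp add: matrix_mul_assoc)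
    thus ?thesis unfolding OO1 by simp
  qed
  have BbH: "Bb ** H = H ** D"
  proof -
    have "Bb ** H = H ** D ** (transpose H ** H)"
      using Bbar_eig unfolding Bb_def by (simp add: matrix_mul_assoc)
    thus ?thesis using H_orth by simp
  qed
  have Bb_e: "Bb$k$l = (\<Sum>i\<in>UNIV. D$i$i * H$k$i * H$l$i)" for k l
    using Bbar_eig unfolding Bb_def[symmetric]
    by (simp add: matrix_matrix_mult_def[of "H ** D"] diag_right D_diag transpose_def mult.commute mult.left_commute)
  have dnz: "D$i$i \<noteq> 0" for i
  proof
    assume d0: "D$i$i = 0"
    have "D *v axis i 1 = 0" using d0 D_diag
      by (auto simp: vec_eq_iff diag_vec axis_def)
    hence "rank D \<noteq> CARD('r)"
      using matrix_nonfull_linear_equations_eq[of D] by (metis axis_eq_0_iff zero_neq_one)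
    hence "rank D < CARD('r)" using rank_bound[of D] by simp
    moreover have "rank B \<le> rank D"
    proof -
      have "rank B \<le> rank (Oinv ** Bb)" unfolding BOO[symmetric] by (metis BOO rank_mul_le_left)
      also have "\<dots> \<le> rank Bb" by (rule rank_mul_le_right)
      also have "\<dots> \<le> rank (H ** D)" unfolding Bb_def Bbar_eig by (rule rank_mul_le_left)
      also have "\<dots> \<le> rank D" by (rule rank_mul_le_right)
      finally show ?thesis .
    qed
    ultimately show False using rankB by simp
  qed
  have dbd: "iota_lo < D$i$i \<and> D$i$i < iota_hi" for i
  proof -
    define d where "d = D$i$i"
    define h where "h = H *v axis i 1"
    have "Bb *v h = d *s h"
      unfolding h_def matrix_vector_mul_assoc BbH d_def
      by (simp add: vec_eq_iff matrix_vector_mult_basis column_def diag_right D_diag mult.commute)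
    define v where "v = Q *v h"
    have "transpose H *v h = axis i 1"
      unfolding h_def matrix_vector_mul_assoc H_orth by simp
    hence hnz: "h \<noteq> 0" by (metis axis_eq_0_iff matrix_vector_mult_0_right zero_neq_one)
    have "transpose Q *v v = h" unfolding v_def matrix_vector_mul_assoc QTQ by simp
    hence vnz: "v \<noteq> 0" using hnz by auto
    have Pv: "P *v v = d *s v"
    proof -
      have "P *v v = Q *v (Bb *v ((transpose Q ** Q) *v h))"
        unfolding v_def QBQ[symmetric] by (simp add: matrix_vector_mul_assoc matrix_mul_assoc)
      also have "\<dots> = Q *v (d *s h)" unfolding QTQ using \<open>Bb *v h = d *s h\<close> by simp
      finally show ?thesis unfolding v_def by (simp add: vector_scalar_commute)
    qed
    have PU: "P = U ** Sig ** transpose U" using P_eig unfolding P_def .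
    define w where "w = (1/d) *s (Sig *v (transpose U *v v))"
    have Uw: "U *v w = v"
    proof -
      have "U *v w = (1/d) *s (U *v (Sig *v (transpose U *v v)))"
        unfolding w_def by (rule vector_scalar_commute)
      also have "U *v (Sig *v (transpose U *v v)) = P *v v"
        unfolding PU by (simp only: matrix_vector_mul_assoc matrix_mul_assoc)
      finally show ?thesis using Pv dnz[of i] unfolding d_def by (simp add: vector_smult_assoc)
    qed
    have UTv: "transpose U *v v = w"
      by (metis Uw U_orth matrix_vector_mul_assoc matrix_vector_mul_lid)
    have "Sig *v w = d *s w"
    proof -
      have "transpose U *v (P *v v) = (transpose U ** U) *v (Sig *v (transpose U *v v))"
        unfolding PU by (simp only: matrix_vector_mul_assoc matrix_mul_assoc)
      also have "\<dots> = Sig *v w" unfolding U_orth UTv by (rule matrix_vector_mul_lid)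
      finally have "Sig *v w = transpose U *v (d *s v)" by (metis Pv)
      also have "\<dots> = d *s w" by (simp only: vector_scalar_commute UTv)
      finally show ?thesis .
    qed
    moreover have "w \<noteq> 0" using Uw vnz by auto
    then obtain j where "w$j \<noteq> 0" by (auto simp: vec_eq_iff)
    ultimately have "Sig$j$j = d" using diag_vec[OF Sig_diag, of w j]
      by (metis mult_cancel_right vector_smult_component)
    thus ?thesis using iota_bd unfolding d_def by metis
  qed
  show ?thesis
  proof (intro allI impI)
    fix k l :: 'K assume kl: "k \<noteq> l"
    show "cosine (H$k) (H$l) \<le> sqrt (1 - eta' / (iota_hi * beta^2 / iota_lo))"
    proof (rule key_bound[where d="\<lambda>i. D$i$i"])
      show "\<forall>i. iota_lo < D$i$i \<and> D$i$i < iota_hi" using dbd by blast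
      show "Bb$k$k = (\<Sum>i\<in>UNIV. D$i$i * H$k$i * H$k$i)" by (rule Bb_e)
      show "Bb$l$l = (\<Sum>i\<in>UNIV. D$i$i * H$l$i * H$l$i)" by (rule Bb_e)
      show "Bb$k$l = (\<Sum>i\<in>UNIV. D$i$i * H$k$i * H$l$i)" by (rule Bb_e)
      show "eta' \<le> Bb$k$k * Bb$l$l - (Bb$k$l)^2" using eta_bd kl unfolding Bb_def by blast
    qed (use pos beta_bd in \<open>auto simp: Bb_def\<close>)
  qed
qed

end
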